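(* Let $\alpha\in(0,1)$ be irrational, let $s_\alpha$ be a Sturmian word of angle $\alpha$, and let $n$ be a positive even integer. For $0\le i\le n$, let $t_i$ be the factor of length $n$ associated with the interval $L_i(n)$. Then $t_i$ is an abelian square if and only if either $\lfloor n\alpha\rfloor$ is even and $L_i(n)\subset[0,\{-n\alpha\})$, or $\lfloor n\alpha\rfloor$ is odd and $L_i(n)\subset[\{-n\alpha\},1)$.
   Context: Alphabet $\{a,b\}$; $\{x\}=x-\lfloor x\rfloor$ is the fractional part. For irrational $\alpha\in(0,1)$ and $\rho\in[0,1)$, the Sturmian word $s_{\alpha,\rho}=c_0c_1c_2\cdots$ is defined by $c_m=b$ if $\{\rho+m\alpha\}\in[0,1-\alpha)$ and $c_m=a$ otherwise (or with the intervals $(0,1-\alpha]$ and $(1-\alpha,1]$ instead); all such words have the same set of factors, and $s_\alpha$ denotes any of them. For $i\ge 0$ let $I_b^{-i}=[\{-i\alpha\},\{-(i+1)\alpha\})$, understood circularly on $[0,1)$ (if the left endpoint exceeds the right one it means $[\{-i\alpha\},1)\cup[0,\{-(i+1)\alpha\})$). For $x\in[0,1)$ let $u_n(x)=d_0\cdots d_{n-1}$ with $d_i=b$ if $x\in I_b^{-i}$ and $d_i=a$ otherwise; the factor of $s_{\alpha,\rho}$ of length $n$ at position $j$ is $u_n(\{\rho+j\alpha\})$. Arranging the $n+2$ points $0,1,\{-\alpha\},\dots,\{-n\alpha\}$ in increasing order partitions $[0,1)$ into $n+1$ half-open intervals $L_0(n),\dots,L_n(n)$ (in increasing order); $u_n$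 is constant on each $L_i(n)$, and its value there is the factor $t_i$ associated with $L_i(n)$; these are exactly the $n+1$ distinct factors of length $n$. An abelian square is a word $v_1v_2$ where $v_1,v_2$ have the same numbers of $a$'s and of $b$'s. *)

theory Defs
  imports Complex_Main
begin

datatype letter = a | b

definition circ_ico :: "real \<Rightarrow> real \<Rightarrow> real set" where
  "circ_ico l r = (if l \<le> r then {l..<r} else {l..<1} \<union> {0..<r})"

definition Ib :: "real \<Rightarrow> nat \<Rightarrow> real set" where
  "Ib \<alpha> i = circ_ico (frac (- real i * \<alpha>)) (frac (- real (Suc i) * \<alpha>))"

definition u :: "real \<Rightarrow> nat \<Rightarrow> real \<Rightarrow> letter list" where
  "u \<alpha> n x = map (\<lambda>i. if x \<in> Ib \<alpha> i then b else a) [0..<n]"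

definition pts :: "real \<Rightarrow> nat \<Rightarrow> real list" where
  "pts \<alpha> n = sorted_list_of_set ({0, 1} \<union> (\<lambda>k. frac (- real k * \<alpha>)) ` {1..n})"

definition L :: "real \<Rightarrow> nat \<Rightarrow> nat \<Rightarrow> real set" where
  "L \<alpha> n i = {pts \<alpha> n ! i ..< pts \<alpha> n ! Suc i}"

text \<open>t_i: the factor associated with L_i(n), i.e. the (constant) value of u_n on L_i(n),
  taken at its left endpoint.\<close>
definition t :: "real \<Rightarrow> nat \<Rightarrow> nat \<Rightarrow> letter list" where
  "t \<alpha> n i = u \<alpha> n (pts \<alpha> n ! i)"

definition abelian_square :: "letter list \<Rightarrow> bool" where
  "abelian_square w \<longleftrightarrow> (\<exists>v1 v2. w = v1 @ v2 \<and>
     count_list v1 a = count_list v2 a \<and> count_list v1 b = count_list v2 b)"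

end

theory Submission
  imports Defs
begin

lemma Ib_iff:
  fixes \<alpha> x :: real and j :: nat
  assumes "0 \<le> x" "x < 1" "0 < \<alpha>" "\<alpha> < 1"
  shows "x \<in> Ib \<alpha> j \<longleftrightarrow> \<lfloor>x + real (Suc j) * \<alpha>\<rfloor> = \<lfloor>x + real j * \<alpha>\<rfloor>"
proof -
  define P where "P = \<lfloor>- real j * \<alpha>\<rfloor>"
  define p where "p = - real j * \<alpha> - P"
  define Q where "Q = \<lfloor>- real (Suc j) * \<alpha>\<rfloor>"
  define q where "q = - real (Suc j) * \<alpha> - Q"
  have fp: "frac (- real j * \<alpha>) = p" unfolding p_def P_def frac_def by simp
  have fq: "frac (- real (Suc j) * \<alpha>) = q" unfolding q_def Q_def frac_def by simp
  have p01: "0 \<le> p" "p < 1" unfolding p_def P_def by linarith+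
  have q01: "0 \<le> q" "q < 1" unfolding q_def Q_def by linarith+
  have e1: "- real (Suc j) * \<alpha> = of_int P + (p - \<alpha>)" unfolding p_def by (simp add: algebra_simps)
  have QP: "Q = P + (if p \<ge> \<alpha> then 0 else -1)"
    unfolding Q_def e1 using p01 assms by (simp add: floor_eq_iff)
  have fx1: "\<lfloor>x + real j * \<alpha>\<rfloor> = - P + (if x \<ge> p then 0 else -1)"
  proof -
    have "x + real j * \<alpha> = of_int (-P) + (x - p)" unfolding p_def by simp
    then show ?thesis using p01 assms by (simp add: floor_eq_iff)
  qed
  have fx2: "\<lfloor>x + real (Suc j) * \<alpha>\<rfloor> = - Q + (if x \<ge> q then 0 else -1)"
  proof -
    have "x + real (Suc j) * \<alpha> = of_int (-Q) + (x - q)" unfolding q_def by (simp add: algebra_simps)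
    then show ?thesis using q01 assms by (simp add: floor_eq_iff)
  qed
  have qv: "q = p - \<alpha> + (if p \<ge> \<alpha> then 0 else 1)"
    using QP unfolding q_def p_def by (auto simp: algebra_simps)
  show ?thesis
    unfolding Ib_def circ_ico_def fp fq fx1 fx2 QP
    using qv p01 q01 assms by (auto split: if_splits)
qed


lemma u_Suc: "u \<alpha> (Suc k) x = u \<alpha> k x @ [if x \<in> Ib \<alpha> k then b else a]"
  unfolding u_def by simp

lemma floor_step:
  fixes \<alpha> y :: real
  assumes "0 < \<alpha>" "\<alpha> < 1"
  shows "\<lfloor>y + \<alpha>\<rfloor> = \<lfloor>y\<rfloor> \<or> \<lfloor>y + \<alpha>\<rfloor> = \<lfloor>y\<rfloor> + 1"
  using assms by (simp add: floor_eq_iff) linarith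

lemma count_a:
  fixes \<alpha> x :: real
  assumes "0 \<le> x" "x < 1" "0 < \<alpha>" "\<alpha> < 1"
  shows "int (count_list (u \<alpha> k x) a) = \<lfloor>x + real k * \<alpha>\<rfloor>"
proof (induction k)
  case 0
  then show ?case using assms by (simp add: u_def floor_eq_iff)
next
  case (Suc k)
  have st: "\<lfloor>x + real (Suc k) * \<alpha>\<rfloor> = \<lfloor>x + real k * \<alpha>\<rfloor> \<or>
        \<lfloor>x + real (Suc k) * \<alpha>\<rfloor> = \<lfloor>x + real k * \<alpha>\<rfloor> + 1"
    using floor_step[OF assms(3,4), of "x + real k * \<alpha>"] by (simp add: algebra_simps)
  show ?case using Suc st Ib_iff[OF assms, of k] by (auto simp: u_Suc)
qed

lemma len_count: "length w = count_list w a + count_list w b"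
proof (induction w)
  case (Cons c w)
  then show ?case by (cases c) auto
qed simp

lemma floor_even:
  fixes x A :: real
  assumes "0 \<le> x" "x < 1"
  shows "2 * \<lfloor>A\<rfloor> = \<lfloor>2 * A - x\<rfloor> \<longleftrightarrow> even \<lfloor>2 * A - x\<rfloor>"
proof -
  define r where "r = A - \<lfloor>A\<rfloor>"
  have r: "0 \<le> r" "r < 1" unfolding r_def by linarith+
  have e: "2 * A - x = of_int (2 * \<lfloor>A\<rfloor>) + (2 * r - x)" unfolding r_def by simp
  have "\<lfloor>2 * r - x\<rfloor> \<in> {-1, 0, 1}" using r assms by (simp add: floor_eq_iff) linarith
  moreover have "\<lfloor>2 * A - x\<rfloor> = 2 * \<lfloor>A\<rfloor> + \<lfloor>2 * r - x\<rfloor>"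
    unfolding e by (rule int_add_floor[symmetric])
  ultimately show ?thesis by auto
qed

lemma abelian_iff:
  assumes "length w = 2 * m"
  shows "abelian_square w \<longleftrightarrow> count_list (take m w) a = count_list (drop m w) a"
proof
  assume "abelian_square w"
  then obtain v1 v2 where w: "w = v1 @ v2" and c: "count_list v1 a = count_list v2 a"
    "count_list v1 b = count_list v2 b" unfolding abelian_square_def by blast
  have "length v1 = length v2" using c len_count[of v1] len_count[of v2] by simp
  then have "length v1 = m" using assms w by simp
  then show "count_list (take m w) a = count_list (drop m w) a" using w c by simp
next
  assume c: "count_list (take m w) a = count_list (drop m w) a"
  have l: "length (take m w) = length (drop m w)" using assms by simp
  show "abelian_square w" unfolding abelian_square_def
    apply (rule exI[of _ "take m w"], rule exI[of _ "drop m w"])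
    using c l len_count[of "take m w"] len_count[of "drop m w"] by simp
qed

lemma abelian_u:
  fixes \<alpha> x :: real
  assumes "0 \<le> x" "x < 1" "0 < \<alpha>" "\<alpha> < 1" "n = 2 * m"
  shows "abelian_square (u \<alpha> n x) \<longleftrightarrow> even \<lfloor>x + real n * \<alpha>\<rfloor>"
proof -
  have tk: "take m (u \<alpha> n x) = u \<alpha> m x" using assms(5) unfolding u_def by (simp add: take_map)
  have tot: "count_list (u \<alpha> n x) a = count_list (take m (u \<alpha> n x)) a + count_list (drop m (u \<alpha> n x)) a"
    by (metis append_take_drop_id count_list_append)
  have "abelian_square (u \<alpha> n x) \<longleftrightarrow> 2 * int (count_list (u \<alpha> m x) a) = int (count_list (u \<alpha> n x) a)"
    using abelian_iff[of "u \<alpha> n x" m] assms(5) tk tot by (simp add: u_def)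
  also have "\<dots> \<longleftrightarrow> 2 * \<lfloor>x + real m * \<alpha>\<rfloor> = \<lfloor>2 * (x + real m * \<alpha>) - x\<rfloor>"
    using count_a[OF assms(1-4)] assms(5) by (simp add: algebra_simps)
  also have "\<dots> \<longleftrightarrow> even \<lfloor>2 * (x + real m * \<alpha>) - x\<rfloor>" by (rule floor_even[OF assms(1,2)])
  also have "2 * (x + real m * \<alpha>) - x = x + real n * \<alpha>" using assms(5) by (simp add: algebra_simps)
  finally show ?thesis .
qed


lemma mult_notint:
  fixes \<alpha> :: real and k :: int
  assumes "\<alpha> \<notin> \<rat>" "k \<noteq> 0"
  shows "of_int k * \<alpha> \<notin> \<int>"
proof
  assume "of_int k * \<alpha> \<in> \<int>"
  then obtain z where z: "of_int k * \<alpha> = of_int z" by (auto elim: Ints_cases)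
  then have "\<alpha> = of_int z / of_int k" using assms(2) by (simp add: field_simps)
  then have "\<alpha> \<in> \<rat>" by simp
  with assms(1) show False by simp
qed

lemma card_pts_set:
  fixes \<alpha> :: real
  assumes "\<alpha> \<notin> \<rat>"
  shows "card ({0, 1} \<union> (\<lambda>k. frac (- real k * \<alpha>)) ` {1..n}) = n + 2"
proof -
  let ?f = "\<lambda>k::nat. frac (- real k * \<alpha>)"
  have inj: "inj_on ?f {1..n}"
  proof (rule inj_onI)
    fix k k' :: nat assume "k \<in> {1..n}" "k' \<in> {1..n}" and e: "?f k = ?f k'"
    have "(- real k * \<alpha>) - (- real k' * \<alpha>) = of_int (\<lfloor>- real k * \<alpha>\<rfloor> - \<lfloor>- real k' * \<alpha>\<rfloor>)"
      using e unfolding frac_def by simp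
    moreover have "of_int (int k' - int k) * \<alpha> = (- real k * \<alpha>) - (- real k' * \<alpha>)"
      by (simp add: algebra_simps)
    ultimately have "of_int (int k' - int k) * \<alpha> \<in> \<int>" by simp
    then have "int k' - int k = 0" using mult_notint[OF assms] by blast
    then show "k = k'" by simp
  qed
  have pos: "0 < ?f k \<and> ?f k < 1" if "k \<in> {1..n}" for k
  proof -
    have "of_int (- int k) * \<alpha> \<notin> \<int>" using mult_notint[OF assms, of "- int k"] that by simp
    then show ?thesis using frac_lt_1 by (simp add: frac_gt_0_iff)
  qed
  have disj: "{0, 1} \<inter> ?f ` {1..n} = {}" using pos by fastforce
  have "card ({0, 1} \<union> ?f ` {1..n}) = card {0::real, 1} + card (?f ` {1..n})"
    by (rule card_Un_disjoint) (use disj in auto)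
  also have "\<dots> = n + 2" using card_image[OF inj] by simp
  finally show ?thesis .
qed

theorem proposition4:
  fixes \<alpha> :: real and n i :: nat
  assumes "0 < \<alpha>" "\<alpha> < 1" "\<alpha> \<notin> \<rat>"
    and "n > 0" "even n" "i \<le> n"
  shows "abelian_square (t \<alpha> n i) \<longleftrightarrow>
           (even \<lfloor>real n * \<alpha>\<rfloor> \<and> L \<alpha> n i \<subseteq> {0..<frac (- real n * \<alpha>)}) \<or>
           (odd \<lfloor>real n * \<alpha>\<rfloor> \<and> L \<alpha> n i \<subseteq> {frac (- real n * \<alpha>)..<1})"
proof -
  define S where "S = ({0, 1} \<union> (\<lambda>k. frac (- real k * \<alpha>)) ` {1..n})"
  define ps where "ps = pts \<alpha> n"
  have psd: "ps = sorted_list_of_set S" unfolding ps_def pts_def S_def ..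
  have fin: "finite S" unfolding S_def by simp
  have len: "length ps = n + 2"
  proof -
    have "length ps = card S" unfolding psd by (rule length_sorted_list_of_set)
    also have "\<dots> = n + 2" unfolding S_def by (rule card_pts_set[OF assms(3)])
    finally show ?thesis .
  qed
  have setps: "set ps = S" unfolding psd using fin by simp
  have ss: "sorted_wrt (<) ps" unfolding psd by (rule strict_sorted_list_of_set)
  have so: "sorted ps" using ss by (simp add: strict_sorted_iff)
  have S01: "s \<in> S \<Longrightarrow> 0 \<le> s \<and> s \<le> 1" for s
    unfolding S_def using frac_lt_1 by (auto intro: less_imp_le)
  define x where "x = ps ! i"
  define y where "y = ps ! Suc i"
  define c where "c = frac (- real n * \<alpha>)"
  have xy: "x < y" unfolding x_def y_def using sorted_wrt_nth_less[OF ss, of i "Suc i"] len assms(6) by simp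
  have xS: "x \<in> S" unfolding x_def setps[symmetric] using len assms(6) by (intro nth_mem) simp
  have yS: "y \<in> S" unfolding y_def setps[symmetric] using len assms(6) by (intro nth_mem) simp
  have x0: "0 \<le> x" using S01[OF xS] by simp
  have y1: "y \<le> 1" using S01[OF yS] by simp
  have x1: "x < 1" using xy y1 by simp
  have cS: "c \<in> set ps" unfolding setps S_def c_def using assms(4) by auto
  then obtain k where k: "k < length ps" "ps ! k = c" by (meson in_set_conv_nth)
  have yc: "y \<le> c \<longleftrightarrow> x < c"
  proof
    assume "y \<le> c" then show "x < c" using xy by simp
  next
    assume xc: "x < c"
    have "i < k"
    proof (rule ccontr)
      assume "\<not> i < k"
      then have "ps ! k \<le> ps ! i" using sorted_nth_mono[OF so, of k i] len assms(6) by simp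
      then show False using xc k unfolding x_def by simp
    qed
    then show "y \<le> c" unfolding y_def using sorted_nth_mono[OF so, of "Suc i" k] k by simp
  qed
  have nint: "real n * \<alpha> \<notin> \<int>" using mult_notint[OF assms(3), of "int n"] assms(4) by simp
  have cv: "c = 1 - frac (real n * \<alpha>)" unfolding c_def using nint frac_neg[of "real n * \<alpha>"] by simp
  have fl: "\<lfloor>x + real n * \<alpha>\<rfloor> = \<lfloor>real n * \<alpha>\<rfloor> + (if x < c then 0 else 1)"
  proof -
    have "x + real n * \<alpha> = of_int \<lfloor>real n * \<alpha>\<rfloor> + (x + frac (real n * \<alpha>))"
      unfolding frac_def by simp
    moreover have "0 \<le> frac (real n * \<alpha>)" "frac (real n * \<alpha>) < 1" by (simp_all add: frac_lt_1)
    ultimately show ?thesis using x0 x1 cv frac_ge_0[of "real n * \<alpha>"]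
      by (simp only: floor_eq_iff) (auto simp del: frac_ge_0)
  qed
  obtain m where m: "n = 2 * m" using assms(5) by blast
  have ab: "abelian_square (t \<alpha> n i) \<longleftrightarrow> even \<lfloor>x + real n * \<alpha>\<rfloor>"
    unfolding t_def ps_def[symmetric] x_def[symmetric]
    by (rule abelian_u[OF x0 x1 assms(1,2) m])
  have Lxy: "L \<alpha> n i = {x..<y}" unfolding L_def ps_def[symmetric] x_def y_def ..
  show ?thesis
    unfolding ab fl Lxy c_def[symmetric] using xy x0 y1 yc by auto
qed

end
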